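(* Let $\Omega=\{x+iy\in\mathbb{C}: y>0,\ x^2+y^2<1\}$ and let $\Omega^c$ be the complement of its closure in the Riemann sphere. Let $g$ be the unique conformal map of the unit disk $\Delta$ onto $\Omega^c$ with $g(0)=\infty$ and Laurent expansion $g(z)=\kappa/z+c+O(z)$ at $0$ with $\kappa>0$. Then \[ \kappa=\frac{4}{3\sqrt3},\qquad c=\frac{2i}{3\sqrt3}. \]
   Context: $\Delta=\{z:|z|<1\}$. For a bounded simply connected domain $D$, the number $\kappa$ above is the outer radius (logarithmic capacity) of $D$ and $c$ is called the outer conformal center of $D$. *)

theory Defs
  imports "HOL-Analysis.Analysis" "HOL-Library.Landau_Symbols"
begin

definition upper_half_disk :: "complex set" where
  "upper_half_disk = {z. Im z > 0 \<and> (Re z)\<^sup>2 + (Im z)\<^sup>2 < 1}"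

end

theory Submission
  imports Defs "HOL-Complex_Analysis.Complex_Analysis"
begin


definition EE :: "complex set" where "EE = {w. Im w < 0 \<or> 1 < cmod w}"

lemma closure_uhd: "closure upper_half_disk = {w. 0 \<le> Im w \<and> cmod w \<le> 1}"
proof
  have cl: "closed {w. 0 \<le> Im w \<and> cmod w \<le> 1}"
  proof -
    have "{w. 0 \<le> Im w \<and> cmod w \<le> 1} = {w. Im w \<ge> 0} \<inter> cball 0 1" by auto
    thus ?thesis using closed_halfspace_Im_ge[of 0] by (simp add: closed_Int)
  qed
  have "upper_half_disk \<subseteq> {w. 0 \<le> Im w \<and> cmod w \<le> 1}"
  proof
    fix w assume "w \<in> upper_half_disk"
    hence "Im w > 0" "(Re w)\<^sup>2 + (Im w)\<^sup>2 < 1" by (auto simp: upper_half_disk_def)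
    moreover have "cmod w = sqrt ((Re w)\<^sup>2 + (Im w)\<^sup>2)" by (simp add: cmod_def)
    ultimately show "w \<in> {w. 0 \<le> Im w \<and> cmod w \<le> 1}" by auto
  qed
  thus "closure upper_half_disk \<subseteq> {w. 0 \<le> Im w \<and> cmod w \<le> 1}"
    using cl by (rule closure_minimal)
next
  show "{w. 0 \<le> Im w \<and> cmod w \<le> 1} \<subseteq> closure upper_half_disk"
  proof
    fix w assume w: "w \<in> {w. 0 \<le> Im w \<and> cmod w \<le> 1}"
    show "w \<in> closure upper_half_disk"
      unfolding closure_approachable
    proof (intro allI impI)
      fix e :: real assume e: "e > 0"
      define d where "d = min (1/2) (e/2)"
      have d: "0 < d" "d \<le> 1/2" "d \<le> e/2" using e by (auto simp: d_def)
      define x where "x = complex_of_real (1-d) * w + complex_of_real d * (\<i>/2)"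
      have "cmod x \<le> (1-d) * cmod w + d/2"
      proof -
        have "cmod x \<le> cmod (complex_of_real (1-d) * w) + cmod (complex_of_real d * (\<i>/2))"
          unfolding x_def by (rule norm_triangle_ineq)
        also have "\<dots> = (1-d) * cmod w + d/2"
        proof -
          have "cmod (complex_of_real (1-d)) = 1-d" using d by (simp only: norm_of_real)
          thus ?thesis using d by (simp add: norm_mult norm_divide)
        qed
        finally show ?thesis .
      qed
      also have "\<dots> \<le> (1-d) + d/2" proof - have "(1-d)*cmod w \<le> (1-d)*1" by (rule mult_left_mono) (use w d in auto) thus ?thesis by simp qed
      finally have nx: "cmod x < 1" using d by simp
      have ix: "Im x > 0" proof - have "(1-d)*Im w \<ge> 0" using w d by (intro mult_nonneg_nonneg) auto thus ?thesis using d unfolding x_def by simp qed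
      have "(Re x)\<^sup>2 + (Im x)\<^sup>2 = (cmod x)\<^sup>2" by (simp add: cmod_def)
      also have "\<dots> < 1" using nx by (simp add: power_less_one_iff)
      finally have "x \<in> upper_half_disk" using ix by (simp add: upper_half_disk_def)
      moreover have "dist x w < e"
      proof -
        have "x - w = complex_of_real d * (\<i>/2 - w)" unfolding x_def by (simp add: algebra_simps)
        hence "dist x w = d * cmod (\<i>/2 - w)" using d by (simp add: dist_norm norm_mult)
        also have "cmod (\<i>/2 - w) \<le> 1/2 + 1" using w norm_triangle_ineq4[of "\<i>/2" w] by (simp add: norm_divide)
        hence "d * cmod (\<i>/2 - w) \<le> d * (3/2)" using d by (intro mult_left_mono) auto
        finally show ?thesis using d e by linarith
      qed
      ultimately show "\<exists>x\<in>upper_half_disk. dist x w < e" by blast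
    qed
  qed
qed

lemma compl_closure: "- closure upper_half_disk = EE"
  by (auto simp: closure_uhd EE_def)



lemma trig_key:
  fixes p :: real assumes "0 \<le> p" "p \<le> pi"
  shows "0 < cos p + sin p \<longleftrightarrow> p < 3*pi/4"
proof -
  have s2: "sqrt 2 * sqrt 2 = 2" by simp
  have eq: "cos p + sin p = sqrt 2 * sin (p + pi/4)"
    by (simp add: sin_add sin_45 cos_45 algebra_simps s2)
  show ?thesis
  proof
    assume "0 < cos p + sin p"
    hence "0 < sin (p + pi/4)" using eq by (simp add: zero_less_mult_iff)
    moreover have "p + pi/4 < 2*pi" using assms pi_gt_zero by linarith
    ultimately show "p < 3*pi/4" using sin_le_zero[of "p + pi/4"] by (cases "pi \<le> p + pi/4") auto
  next
    assume "p < 3*pi/4"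
    hence "0 < sin (p + pi/4)" using assms pi_gt_zero by (intro sin_gt_zero) auto
    thus "0 < cos p + sin p" using eq by simp
  qed
qed

lemma trig_key2:
  fixes q :: real assumes "-pi < q" "q \<le> pi"
  shows "0 < cos q + \<bar>sin q\<bar> \<longleftrightarrow> \<bar>q\<bar> < 3*pi/4"
proof -
  have c: "cos q = cos \<bar>q\<bar>" by (cases "q \<ge> 0") auto
  have s: "\<bar>sin q\<bar> = sin \<bar>q\<bar>"
  proof (cases "q \<ge> 0")
    case True thus ?thesis using sin_ge_zero[of q] assms by auto
  next
    case False thus ?thesis using sin_ge_zero[of "-q"] assms by auto
  qed
  show ?thesis unfolding c s using trig_key[of "\<bar>q\<bar>"] assms by auto
qed

definition Good :: "complex \<Rightarrow> bool" where "Good s \<longleftrightarrow> 0 < Re s + \<bar>Im s\<bar>"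

lemma Good_nz: "Good s \<Longrightarrow> s \<noteq> 0" by (auto simp: Good_def)

lemma Good_Ln: assumes "s \<noteq> 0" shows "Good s \<longleftrightarrow> \<bar>Im (Ln s)\<bar> < 3*pi/4"
proof -
  define q where "q = Im (Ln s)"
  have e: "s = exp (Ln s)" using assms by simp
  have re: "Re s = exp (Re (Ln s)) * cos q" using e Re_exp[of "Ln s"] q_def by simp
  have im: "Im s = exp (Re (Ln s)) * sin q" using e Im_exp[of "Ln s"] q_def by simp
  have "Re s + \<bar>Im s\<bar> = exp (Re (Ln s)) * (cos q + \<bar>sin q\<bar>)"
    unfolding re im by (simp add: abs_mult algebra_simps)
  hence "Good s \<longleftrightarrow> 0 < cos q + \<bar>sin q\<bar>" by (simp add: Good_def zero_less_mult_iff)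
  also have "\<dots> \<longleftrightarrow> \<bar>q\<bar> < 3*pi/4"
    using trig_key2[of q] mpi_less_Im_Ln[OF assms] Im_Ln_le_pi[OF assms] q_def by auto
  finally show ?thesis unfolding q_def .
qed

lemma Good_not_nonpos: "Good s \<Longrightarrow> s \<notin> \<real>\<^sub>\<le>\<^sub>0"
  by (auto simp: Good_def nonpos_Reals_def complex_is_Real_iff)

definition P23 :: "complex \<Rightarrow> complex" where "P23 s = exp (complex_of_real (2/3) * Ln s)"
definition P32 :: "complex \<Rightarrow> complex" where "P32 s = exp (complex_of_real (3/2) * Ln s)"

lemma Ln_P23: assumes "Good s" shows "Ln (P23 s) = complex_of_real (2/3) * Ln s"
proof -
  have "\<bar>Im (Ln s)\<bar> < 3*pi/4" using Good_Ln Good_nz assms by blast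
  thus ?thesis unfolding P23_def by (intro Ln_exp) auto
qed

lemma Re_P23: assumes "Good s" shows "0 < Re (P23 s)"
proof -
  have "\<bar>Im (Ln s)\<bar> < 3*pi/4" using Good_Ln Good_nz assms by blast
  hence "0 < cos (2/3 * Im (Ln s))" by (intro cos_gt_zero_pi) auto
  thus ?thesis unfolding P23_def by (simp add: Re_exp)
qed

lemma Ln_P32: assumes "0 < Re t" shows "Ln (P32 t) = complex_of_real (3/2) * Ln t"
proof -
  have "\<bar>Im (Ln t)\<bar> < pi/2" using Re_Ln_pos_lt_imp assms by blast
  thus ?thesis unfolding P32_def by (intro Ln_exp) auto
qed

lemma Good_P32: assumes "0 < Re t" shows "Good (P32 t)"
proof -
  have "\<bar>Im (Ln t)\<bar> < pi/2" using Re_Ln_pos_lt_imp assms by blast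
  moreover have "P32 t \<noteq> 0" by (simp add: P32_def)
  ultimately show ?thesis using Good_Ln[of "P32 t"] Ln_P32[OF assms] by auto
qed

lemma P32_P23: assumes "Good s" shows "P32 (P23 s) = s"
proof -
  have "P32 (P23 s) = exp (complex_of_real (3/2) * (complex_of_real (2/3) * Ln s))"
    unfolding P32_def Ln_P23[OF assms] ..
  also have "complex_of_real (3/2) * (complex_of_real (2/3) * Ln s) = Ln s"
    by (simp flip: mult.assoc of_real_mult)
  finally show ?thesis using Good_nz[OF assms] by simp
qed

lemma P23_P32: assumes "0 < Re t" shows "P23 (P32 t) = t"
proof -
  have "t \<noteq> 0" using assms by auto
  have "P23 (P32 t) = exp (complex_of_real (2/3) * (complex_of_real (3/2) * Ln t))"
    unfolding P23_def Ln_P32[OF assms] ..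
  also have "complex_of_real (2/3) * (complex_of_real (3/2) * Ln t) = Ln t"
    by (simp flip: mult.assoc of_real_mult)
  finally show ?thesis using \<open>t \<noteq> 0\<close> by simp
qed

lemma P23_cube: assumes "s \<noteq> 0" shows "(P23 s)^3 = s^2"
proof -
  have "(P23 s)^3 = exp (of_nat 3 * (complex_of_real (2/3) * Ln s))"
    unfolding P23_def by (simp only: exp_of_nat_mult)
  also have "of_nat 3 * (complex_of_real (2/3) * Ln s) = of_nat 2 * Ln s"
    by (simp flip: mult.assoc of_real_mult)
  also have "exp (of_nat 2 * Ln s) = (exp (Ln s))^2" by (simp only: exp_of_nat_mult)
  finally show ?thesis using assms by simp
qed



definition r2 :: real where "r2 = sqrt 2 / 2"
definition rho :: complex where "rho = Complex (-r2) r2"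
definition t0 :: complex where "t0 = Complex (sqrt 3 / 2) (-1/2)"
definition t1 :: complex where "t1 = Complex (sqrt 3 / 2) (1/2)"

lemma r2_pos: "0 < r2" by (simp add: r2_def)
lemma r2_sq: "r2 * r2 = 1/2" by (simp add: r2_def)
lemma s3: "sqrt 3 * sqrt 3 = 3" by simp
lemma s3_pos: "0 < sqrt 3" by simp

lemma rho_sq: "rho^2 = -\<i>"
  by (simp add: rho_def power2_eq_square complex_eq_iff r2_sq)

lemma rho_nz: "rho \<noteq> 0" using r2_pos by (simp add: rho_def complex_eq_iff)

lemma mrho_exp: "-rho = exp (Complex 0 (-(pi/4)))"
  by (simp add: rho_def complex_eq_iff Re_exp Im_exp r2_def cos_45 sin_45)

lemma Ln_exp_ii: "-pi < x \<Longrightarrow> x \<le> pi \<Longrightarrow> Ln (exp (Complex 0 x)) = Complex 0 x"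
  by (intro Ln_exp) auto

lemma Ln_mrho: "Ln (-rho) = Complex 0 (-(pi/4))"
proof -
  have "-(pi/4) \<le> pi" "-pi < -(pi/4)" using pi_gt_zero by linarith+
  thus ?thesis unfolding mrho_exp by (intro Ln_exp_ii)
qed

lemma t0_exp: "t0 = exp (Complex 0 (-(pi/6)))"
  by (simp add: t0_def complex_eq_iff Re_exp Im_exp cos_30 sin_30)

lemma Ln_t0: "Ln t0 = Complex 0 (-(pi/6))"
proof -
  have "-(pi/6) \<le> pi" "-pi < -(pi/6)" using pi_gt_zero by linarith+
  thus ?thesis unfolding t0_exp by (intro Ln_exp_ii)
qed

lemma P23_mrho: "P23 (-rho) = t0"
proof -
  have "complex_of_real (2/3) * Complex 0 (-(pi/4)) = Complex 0 (-(pi/6))" by (simp add: complex_eq_iff)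
  thus ?thesis unfolding P23_def Ln_mrho t0_exp by simp
qed

lemma P32_t0: "P32 t0 = -rho"
proof -
  have "complex_of_real (3/2) * Complex 0 (-(pi/6)) = Complex 0 (-(pi/4))" by (simp add: complex_eq_iff)
  thus ?thesis unfolding P32_def Ln_t0 mrho_exp by simp
qed

lemma Good_mrho: "Good (-rho)" using r2_pos by (simp add: Good_def rho_def)

lemma t0t1: "t0 * t1 = 1" by (simp add: t0_def t1_def complex_eq_iff s3)
lemma t0pt1: "t0 + t1 \<noteq> 0" by (simp add: t0_def t1_def complex_eq_iff)
lemma Re_t1: "0 < Re t1" by (simp add: t1_def)
lemma Re_t0: "0 < Re t0" by (simp add: t0_def)

lemma t0_cube: "t0^3 = -\<i>"
proof -
  have "t0^3 = exp (of_nat 3 * Complex 0 (-(pi/6)))" unfolding t0_exp by (simp only: exp_of_nat_mult)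
  also have "of_nat 3 * Complex 0 (-(pi/6)) = Complex 0 (-(pi/2))" by (simp add: complex_eq_iff)
  also have "exp (Complex 0 (-(pi/2))) = -\<i>" by (simp add: complex_eq_iff Re_exp Im_exp)
  finally show ?thesis .
qed

definition M :: "complex \<Rightarrow> complex" where "M tau = (tau - t0) / (tau + t1)"
definition Minv :: "complex \<Rightarrow> complex" where "Minv y = (t0 + t1 * y) / (1 - y)"

lemma denom_nz: "0 < Re tau \<Longrightarrow> tau + t1 \<noteq> 0"
  using Re_t1 by (auto simp: complex_eq_iff)

lemma M_norm: assumes "0 < Re tau" shows "cmod (M tau) < 1"
proof -
  have "(cmod (tau - t0))^2 < (cmod (tau + t1))^2"
    unfolding cmod_power2 using assms s3_pos
    by (simp add: t0_def t1_def power2_eq_square algebra_simps)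
  hence "cmod (tau - t0) < cmod (tau + t1)" by (simp add: power2_less_imp_less)
  thus ?thesis by (simp add: M_def norm_divide divide_less_eq_1)
qed

lemma Minv_Re: assumes "cmod y < 1" shows "0 < Re (Minv y)"
proof -
  have y1: "y \<noteq> 1" using assms by auto
  have "(cmod y)^2 < 1" using assms by (simp add: power_less_one_iff)
  hence lt: "(Re y)^2 + (Im y)^2 < 1" using cmod_power2[of y] by simp
  have eq: "Re (t0 + t1 * y) * Re (1 - y) + Im (t0 + t1 * y) * Im (1 - y)
        = sqrt 3 / 2 * (1 - ((Re y)^2 + (Im y)^2))"
    by (simp add: t0_def t1_def power2_eq_square field_simps)
  have num: "0 < Re (t0 + t1 * y) * Re (1 - y) + Im (t0 + t1 * y) * Im (1 - y)"
    unfolding eq using lt s3_pos by (intro mult_pos_pos) auto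
  have "0 < (Re (1-y))^2 + (Im (1-y))^2" using y1
    by (simp add: complex_eq_iff sum_power2_gt_zero_iff)
  thus ?thesis unfolding Minv_def Re_divide using num by simp
qed

lemma M_Minv: assumes "y \<noteq> 1" shows "M (Minv y) = y"
proof -
  have d: "1 - y \<noteq> 0" using assms by simp
  have a: "Minv y - t0 = (t0 + t1) * y / (1 - y)" unfolding Minv_def using d
    by (simp add: field_simps)
  have b: "Minv y + t1 = (t0 + t1) / (1 - y)" unfolding Minv_def using d
    by (simp add: field_simps)
  have "Minv y + t1 \<noteq> 0" unfolding b using d t0pt1 by simp
  moreover have "Minv y - t0 = y * (Minv y + t1)" unfolding a b by simp
  ultimately show ?thesis unfolding M_def by simp
qed

lemma Minv_M: assumes "tau + t1 \<noteq> 0" shows "Minv (M tau) = tau"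
proof -
  have a: "1 - M tau = (t0 + t1) / (tau + t1)" unfolding M_def using assms
    by (simp add: field_simps)
  have b: "t0 + t1 * M tau = (t0 + t1) * tau / (tau + t1)" unfolding M_def using assms t0t1
    by (simp add: field_simps)
  have "1 - M tau \<noteq> 0" unfolding a using assms t0pt1 by simp
  moreover have "t0 + t1 * M tau = tau * (1 - M tau)" unfolding a b by simp
  ultimately show ?thesis unfolding Minv_def by simp
qed

lemma M_t0: "M t0 = 0" by (simp add: M_def)

lemma M_zero: assumes "tau + t1 \<noteq> 0" "M tau = 0" shows "tau = t0"
  using assms by (simp add: M_def)

definition U :: "complex \<Rightarrow> complex" where "U w = (1 + w) / (1 - w)"
definition Uinv :: "complex \<Rightarrow> complex" where "Uinv u = (u - 1) / (u + 1)"

lemma U_ne: "U w \<noteq> -1"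
proof
  assume "U w = -1"
  moreover have "w \<noteq> 1" using calculation by (auto simp: U_def)
  ultimately have "1 + w = -(1 - w)" unfolding U_def by (simp add: field_simps)
  thus False by simp
qed

lemma Uinv_ne: "Uinv u \<noteq> 1"
proof
  assume "Uinv u = 1"
  moreover have "u \<noteq> -1" using calculation by (auto simp: Uinv_def)
  ultimately have "u - 1 = u + 1" unfolding Uinv_def
    by (simp add: field_simps add_eq_0_iff2)
  thus False by simp
qed

lemma Uinv_U: "w \<noteq> 1 \<Longrightarrow> Uinv (U w) = w"
proof -
  assume w: "w \<noteq> 1"
  hence d: "1 - w \<noteq> 0" by simp
  have e1: "U w - 1 = 2 * w / (1 - w)" and e2: "U w + 1 = 2 / (1 - w)" unfolding U_def using d
    by (simp_all add: field_simps)
  show ?thesis unfolding Uinv_def e1 e2 using d by simp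
qed

lemma U_Uinv: "u \<noteq> -1 \<Longrightarrow> U (Uinv u) = u"
proof -
  assume u: "u \<noteq> -1"
  hence d: "u + 1 \<noteq> 0" by (simp add: add_eq_0_iff2)
  have e1: "1 + Uinv u = 2 * u / (u + 1)" and e2: "1 - Uinv u = 2 / (u + 1)" unfolding Uinv_def using d
    by (simp_all add: field_simps)
  show ?thesis unfolding U_def e1 e2 using d by simp
qed

lemma EE_ne1: "w \<in> EE \<Longrightarrow> w \<noteq> 1" by (auto simp: EE_def)

lemma EE_U: assumes "w \<noteq> 1" shows "w \<in> EE \<longleftrightarrow> Re (U w) < 0 \<or> Im (U w) < 0"
proof -
  define den where "den = (Re (1-w))^2 + (Im (1-w))^2"
  have den: "0 < den" unfolding den_def using assms
    by (simp add: complex_eq_iff sum_power2_gt_zero_iff)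
  have re: "Re (U w) = (1 - ((Re w)^2 + (Im w)^2)) / den"
    unfolding U_def Re_divide den_def[symmetric] by (simp add: algebra_simps power2_eq_square)
  have im: "Im (U w) = (2 * Im w) / den"
    unfolding U_def Im_divide den_def[symmetric] by (simp add: algebra_simps power2_eq_square)
  have c: "1 < cmod w \<longleftrightarrow> 1 < (Re w)^2 + (Im w)^2"
    by (metis cmod_power2 norm_ge_zero one_less_power power2_eq_1_iff power_less_imp_less_base
              zero_less_numeral less_le_trans zero_le_one)
  show ?thesis unfolding re im EE_def using den c
    by (auto simp: divide_less_0_iff)
qed

lemma Good_rho: "Good (rho * u) \<longleftrightarrow> Re u < 0 \<or> Im u < 0"
proof -
  have "Re (rho * u) + \<bar>Im (rho * u)\<bar> = r2 * (\<bar>Re u - Im u\<bar> - (Re u + Im u))"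
    using r2_pos by (simp add: rho_def algebra_simps abs_mult flip: abs_minus_commute)
       (simp add: abs_mult_pos' algebra_simps)
  hence "Good (rho * u) \<longleftrightarrow> 0 < \<bar>Re u - Im u\<bar> - (Re u + Im u)"
    using r2_pos by (simp add: Good_def zero_less_mult_iff)
  thus ?thesis by (auto simp: abs_if)
qed



definition F :: "complex \<Rightarrow> complex" where "F w = M (P23 (rho * U w))"
definition H :: "complex \<Rightarrow> complex" where "H y = Uinv (P32 (Minv y) / rho)"

lemma open_EE: "open EE"
  unfolding compl_closure[symmetric] by (simp add: open_Compl)

lemma EE_good: "w \<in> EE \<Longrightarrow> Good (rho * U w)"
  using EE_U[OF EE_ne1] Good_rho by blast

lemma F_in: assumes "w \<in> EE" shows "F w \<in> ball 0 1" "F w \<noteq> 0"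
proof -
  define s where "s = rho * U w"
  have g: "Good s" using EE_good assms s_def by simp
  have re: "0 < Re (P23 s)" using Re_P23[OF g] .
  show "F w \<in> ball 0 1" using M_norm[OF re] by (simp add: F_def s_def)
  show "F w \<noteq> 0"
  proof
    assume "F w = 0"
    hence "P23 s = t0" using M_zero[OF denom_nz[OF re]] by (simp add: F_def s_def)
    hence "s = -rho" using P32_P23[OF g] P32_t0 by simp
    hence "U w = -1" using rho_nz unfolding s_def
      by (metis mult.commute mult_cancel_left mult_minus1_right)
    thus False using U_ne by blast
  qed
qed

lemma H_in: assumes "y \<in> ball 0 1 - {0}" shows "H y \<in> EE"
proof -
  define tau where "tau = Minv y"
  have y1: "cmod y < 1" "y \<noteq> 0" "y \<noteq> 1" using assms by auto
  have re: "0 < Re tau" using Minv_Re[OF y1(1)] tau_def by simp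
  define s where "s = P32 tau"
  have g: "Good s" using Good_P32[OF re] s_def by simp
  define u where "u = s / rho"
  have su: "rho * u = s" using rho_nz u_def by simp
  have ru: "Re u < 0 \<or> Im u < 0" using g su Good_rho by metis
  have un: "u \<noteq> -1"
  proof
    assume "u = -1"
    hence "s = -rho" using su by simp
    hence "tau = t0" using P23_P32[OF re] P23_mrho s_def by metis
    hence "y = 0" using M_Minv[of y] y1 M_t0 tau_def by auto
    thus False using y1 by simp
  qed
  have "H y = Uinv u" by (simp add: H_def u_def s_def tau_def)
  moreover have "U (Uinv u) = u" using U_Uinv[OF un] .
  ultimately show ?thesis using EE_U[OF Uinv_ne[of u]] ru by simp
qed

lemma FH: assumes "y \<in> ball 0 1 - {0}" shows "F (H y) = y"
proof -
  define tau where "tau = Minv y"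
  have y1: "cmod y < 1" "y \<noteq> 1" using assms by auto
  have re: "0 < Re tau" using Minv_Re[OF y1(1)] tau_def by simp
  define s where "s = P32 tau"
  define u where "u = s / rho"
  have su: "rho * u = s" using rho_nz u_def by simp
  have g: "Good s" using Good_P32[OF re] s_def by simp
  have un: "u \<noteq> -1"
  proof
    assume "u = -1"
    hence "s = -rho" using su by simp
    hence "tau = t0" using P23_P32[OF re] P23_mrho s_def by metis
    hence "y = 0" using M_Minv[of y] y1 M_t0 tau_def by auto
    thus False using assms by simp
  qed
  have "U (H y) = u" using U_Uinv[OF un] by (simp add: H_def u_def s_def tau_def)
  hence "F (H y) = M (P23 s)" by (simp add: F_def su)
  also have "P23 s = tau" using P23_P32[OF re] s_def by simp
  also have "M tau = y" using M_Minv[OF y1(2)] tau_def by simp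
  finally show ?thesis .
qed

lemma Minv_F: assumes "w \<in> EE" shows "Minv (F w) = P23 (rho * U w)"
proof -
  have g: "Good (rho * U w)" using EE_good assms by simp
  show ?thesis unfolding F_def using Minv_M[OF denom_nz[OF Re_P23[OF g]]] .
qed

lemma HF: assumes "w \<in> EE" shows "H (F w) = w"
proof -
  have g: "Good (rho * U w)" using EE_good assms by simp
  have "P32 (Minv (F w)) / rho = U w" unfolding Minv_F[OF assms] P32_P23[OF g] using rho_nz by simp
  thus ?thesis unfolding H_def using Uinv_U[OF EE_ne1[OF assms]] by simp
qed

lemma F_cube: assumes "w \<in> EE" shows "(Minv (F w))^3 = -\<i> * (U w)^2"
proof -
  have g: "Good (rho * U w)" using EE_good assms by simp
  have "(Minv (F w))^3 = (rho * U w)^2" unfolding Minv_F[OF assms] using P23_cube Good_nz[OF g] by simp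
  also have "\<dots> = -\<i> * (U w)^2" by (simp add: power_mult_distrib rho_sq)
  finally show ?thesis .
qed

lemma F_holo: "F holomorphic_on EE"
proof -
  have h1: "(\<lambda>w. rho * U w) holomorphic_on EE" unfolding U_def
    using EE_ne1 by (intro holomorphic_intros) auto
  have h2: "(\<lambda>w. Ln (rho * U w)) holomorphic_on EE"
    by (rule holomorphic_on_Ln'[OF _ h1]) (use EE_good Good_not_nonpos in blast)
  have h3: "(\<lambda>w. P23 (rho * U w)) holomorphic_on EE" unfolding P23_def
    by (rule holomorphic_on_exp'[OF holomorphic_on_mult[OF holomorphic_on_const h2]])
  have "(\<lambda>w. M (P23 (rho * U w))) holomorphic_on EE" unfolding M_def
    using h3 denom_nz Re_P23 EE_good by (intro holomorphic_intros) auto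
  thus ?thesis unfolding F_def[abs_def] .
qed

lemma F_lim: assumes "(f \<longlongrightarrow> -1) Fil" shows "((\<lambda>x. M (P23 (rho * f x))) \<longlongrightarrow> 0) Fil"
proof -
  have "((\<lambda>x. rho * f x) \<longlongrightarrow> -rho) Fil" using tendsto_mult[OF tendsto_const assms, of rho] by simp
  hence "((\<lambda>x. Ln (rho * f x)) \<longlongrightarrow> Ln (-rho)) Fil"
    by (rule tendsto_Ln) (use Good_mrho Good_not_nonpos in blast)
  hence "((\<lambda>x. P23 (rho * f x)) \<longlongrightarrow> P23 (-rho)) Fil" unfolding P23_def
    by (rule tendsto_exp[OF tendsto_mult[OF tendsto_const]])
  hence "((\<lambda>x. P23 (rho * f x)) \<longlongrightarrow> t0) Fil" by (simp add: P23_mrho)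
  hence "((\<lambda>x. M (P23 (rho * f x))) \<longlongrightarrow> M t0) Fil" unfolding M_def
    using t0pt1 by (intro tendsto_intros) (auto simp: add.commute)
  thus ?thesis by (simp add: M_t0)
qed



lemma coeff_zero:
  fixes A1 A2 :: complex and R Q1 Q2 s :: "complex \<Rightarrow> complex" and C :: real
  assumes ev: "eventually (\<lambda>z. A1*z + A2*z^2 + z^3 * R z + s z * (z * Q1 z + s z * Q2 z) = 0) (at 0)"
    and R: "(R \<longlongrightarrow> r) (at 0)" and Q1: "(Q1 \<longlongrightarrow> q1) (at 0)" and Q2: "(Q2 \<longlongrightarrow> q2) (at 0)"
    and sb: "eventually (\<lambda>z. cmod (s z) \<le> C * (cmod z)^2) (at 0)"
  shows "A1 = 0 \<and> A2 = 0"
proof -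
  have z0: "((\<lambda>z::complex. z) \<longlongrightarrow> 0) (at 0)" by (rule tendsto_ident_at)
  have nz: "eventually (\<lambda>z::complex. z \<noteq> 0) (at 0)" by (simp add: eventually_at_filter)
  have "((\<lambda>z. C * (cmod z)^2) \<longlongrightarrow> C * (cmod 0)^2) (at (0::complex))"
    by (intro tendsto_intros)
  hence c0: "((\<lambda>z. C * (cmod z)^2) \<longlongrightarrow> 0) (at (0::complex))" by simp
  have s0: "(s \<longlongrightarrow> 0) (at 0)"
    by (rule Lim_null_comparison[OF sb c0])
  have "((\<lambda>z. C * cmod z) \<longlongrightarrow> C * cmod 0) (at (0::complex))"
    by (intro tendsto_intros)
  hence c1: "((\<lambda>z. C * cmod z) \<longlongrightarrow> 0) (at (0::complex))" by simp
  have sz: "eventually (\<lambda>z. cmod (s z / z) \<le> C * cmod z) (at 0)"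
    using sb nz
  proof eventually_elim
    case (elim z)
    hence "cmod (s z) / cmod z \<le> C * (cmod z)^2 / cmod z"
      by (intro divide_right_mono) auto
    thus ?case using elim by (simp add: norm_divide power2_eq_square)
  qed
  have sz0: "((\<lambda>z. s z / z) \<longlongrightarrow> 0) (at 0)"
    by (rule Lim_null_comparison[OF sz c1])
  define K where "K z = z * Q1 z + s z * Q2 z" for z
  have K0: "(K \<longlongrightarrow> 0) (at 0)"
  proof -
    have "(K \<longlongrightarrow> 0 * q1 + 0 * q2) (at 0)" unfolding K_def[abs_def]
      by (intro tendsto_intros z0 Q1 Q2 s0)
    thus ?thesis by simp
  qed
  have ev': "eventually (\<lambda>z. A1*z + A2*z^2 + z^3 * R z + s z * K z = 0) (at 0)"
    using ev unfolding K_def .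
  have f1: "((\<lambda>z. A1 + A2 * z + z^2 * R z + (s z / z) * K z) \<longlongrightarrow> A1 + A2 * 0 + 0^2 * r + 0 * 0) (at 0)"
    by (intro tendsto_intros z0 R sz0 K0)
  have f1': "eventually (\<lambda>z. A1 + A2 * z + z^2 * R z + (s z / z) * K z = 0) (at 0)"
    using ev' nz
  proof eventually_elim
    case (elim z)
    have "z * (A1 + A2 * z + z^2 * R z + (s z / z) * K z) = A1*z + A2*z^2 + z^3 * R z + s z * K z"
      using elim(2) by (simp add: field_simps power2_eq_square power3_eq_cube)
    thus ?case using elim by simp
  qed
  have "((\<lambda>z. A1 + A2 * z + z^2 * R z + (s z / z) * K z) \<longlongrightarrow> 0) (at 0)"
    using tendsto_eventually[OF f1'] by simp
  with f1 have A1: "A1 = 0" using tendsto_unique[OF at_neq_bot] by fastforce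
  have sz2: "eventually (\<lambda>z. cmod ((s z / z^2) * K z) \<le> C * cmod (K z)) (at 0)"
    using sb nz
  proof eventually_elim
    case (elim z)
    hence "cmod (s z) / (cmod z)^2 \<le> C * (cmod z)^2 / (cmod z)^2"
      by (intro divide_right_mono) auto
    hence "cmod (s z / z^2) \<le> C" using elim by (simp add: norm_divide norm_power)
    thus ?case by (subst norm_mult) (rule mult_right_mono[OF _ norm_ge_zero])
  qed
  have "((\<lambda>z. C * cmod (K z)) \<longlongrightarrow> C * cmod 0) (at 0)" by (intro tendsto_intros K0)
  hence "((\<lambda>z. C * cmod (K z)) \<longlongrightarrow> 0) (at 0)" by simp
  hence sK: "((\<lambda>z. (s z / z^2) * K z) \<longlongrightarrow> 0) (at 0)" by (rule Lim_null_comparison[OF sz2])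
  have f2: "((\<lambda>z. A2 + z * R z + (s z / z^2) * K z) \<longlongrightarrow> A2 + 0 * r + 0) (at 0)"
    by (intro tendsto_intros z0 R sK)
  have f2': "eventually (\<lambda>z. A2 + z * R z + (s z / z^2) * K z = 0) (at 0)"
    using ev' nz
  proof eventually_elim
    case (elim z)
    have "z^2 * (A2 + z * R z + (s z / z^2) * K z) = A1*z + A2*z^2 + z^3 * R z + s z * K z"
      using elim(2) A1 by (simp add: field_simps power2_eq_square power3_eq_cube)
    thus ?case using elim by simp
  qed
  have "((\<lambda>z. A2 + z * R z + (s z / z^2) * K z) \<longlongrightarrow> 0) (at 0)"
    using tendsto_eventually[OF f2'] by simp
  with f2 have "A2 = 0" using tendsto_unique[OF at_neq_bot] by fastforce
  with A1 show ?thesis by simp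
qed



definition A0f :: "complex => complex => complex => complex => complex => complex => complex" where
  "A0f a p q j k c = (k^2 * j + p^3 * k^2)"

definition A1f :: "complex => complex => complex => complex => complex => complex => complex" where
  "A1f a p q j k c = (2 * k * j + 2 * k * c * j - 2 * p^3 * k + 2 * p^3 * k * c - 3 * a * k^2 * j + 3 * a * p^2 * q * k^2)"

definition A2f :: "complex => complex => complex => complex => complex => complex => complex" where
  "A2f a p q j k c = (j + 2 * c * j + c^2 * j + p^3 - 2 * p^3 * c + p^3 * c^2 - 6 * a * k * j - 6 * a * k * c * j - 6 * a * p^2 * q * k + 6 * a * p^2 * q * k * c + 3 * a^2 * k^2 * j + 3 * a^2 * p * q^2 * k^2)"

definition B0f :: "complex => complex => complex => complex => complex => complex => complex" where
  "B0f a p q j k c = (2 * k * j + 2 * p^3 * k)"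

definition Rf :: "complex => complex => complex => complex => complex => complex => complex => complex" where
  "Rf z a p q j k c = (- 3 * a * j - 6 * a * c * j - 3 * a * c^2 * j + 3 * a * p^2 * q - 6 * a * p^2 * q * c + 3 * a * p^2 * q * c^2 + 6 * a^2 * k * j + 6 * a^2 * k * c * j - 6 * a^2 * p * q^2 * k + 6 * a^2 * p * q^2 * k * c - a^3 * k^2 * j + a^3 * q^3 * k^2 + 3 * z * a^2 * j + 6 * z * a^2 * c * j + 3 * z * a^2 * c^2 * j + 3 * z * a^2 * p * q^2 - 6 * z * a^2 * p * q^2 * c + 3 * z * a^2 * p * q^2 * c^2 - 2 * z * a^3 * k * j - 2 * z * a^3 * k * c * j - 2 * z * a^3 * q^3 * k + 2 * z * a^3 * q^3 * k * c - z^2 * a^3 * j - 2 * z^2 * a^3 * c * j - z^2 * a^3 * c^2 * j + z^2 * a^3 * q^3 - 2 * z^2 * a^3 * q^3 * c + z^2 * a^3 * q^3 * c^2)"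

definition Q1f :: "complex => complex => complex => complex => complex => complex => complex => complex => complex" where
  "Q1f z s a p q j k c = (2 * j + 2 * c * j - 2 * p^3 + 2 * p^3 * c - 6 * a * k * j + 6 * a * p^2 * q * k - 6 * z * a * j - 6 * z * a * c * j - 6 * z * a * p^2 * q + 6 * z * a * p^2 * q * c + 6 * z * a^2 * k * j + 6 * z * a^2 * p * q^2 * k + 6 * z^2 * a^2 * j + 6 * z^2 * a^2 * c * j - 6 * z^2 * a^2 * p * q^2 + 6 * z^2 * a^2 * p * q^2 * c - 2 * z^2 * a^3 * k * j + 2 * z^2 * a^3 * q^3 * k - 2 * z^3 * a^3 * j - 2 * z^3 * a^3 * c * j - 2 * z^3 * a^3 * q^3 + 2 * z^3 * a^3 * q^3 * c)"

definition Q2f :: "complex => complex => complex => complex => complex => complex => complex => complex" where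
  "Q2f z a p q j k c = (j + p^3 - 3 * z * a * j + 3 * z * a * p^2 * q + 3 * z^2 * a^2 * j + 3 * z^2 * a^2 * p * q^2 - z^3 * a^3 * j + z^3 * a^3 * q^3)"

lemma poly_id:
  fixes z s a p q j k c :: complex
  shows "(p + q*a*z)^3 * (z - k - c*z - s)^2 + j * (z + k + c*z + s)^2 * (1 - a*z)^3
    = A0f a p q j k c + A1f a p q j k c * z + A2f a p q j k c * z^2 + z^3 * Rf z a p q j k c
      + s * B0f a p q j k c + s * (z * Q1f z s a p q j k c + s * Q2f z a p q j k c)"
  unfolding A0f_def A1f_def A2f_def B0f_def Rf_def Q1f_def Q2f_def by algebra

lemma i_t0: "\<i> - t0 = Complex (-(sqrt 3/2)) (3/2)" by (simp add: t0_def complex_eq_iff)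
lemma norm_i_t0: "cmod (\<i> - t0) = sqrt 3"
proof -
  have "cmod (\<i> - t0) = sqrt ((sqrt 3/2)^2 + (3/2)^2)" unfolding i_t0 by (simp add: cmod_def)
  also have "(sqrt 3/2)^2 + (3/2)^2 = (3::real)" by (simp add: power2_eq_square)
  finally show ?thesis .
qed
lemma t0_i_t0: "t0 * (\<i> - t0) = \<i> * complex_of_real (sqrt 3)"
  by (simp add: t0_def complex_eq_iff field_simps)
lemma t0_i_p: "t0 * (\<i> + t0) = 1"
  by (simp add: t0_def complex_eq_iff field_simps)
lemma t0_sq_i_t1: "t0^2 * (\<i> + t1) = complex_of_real (sqrt 3)"
  by (simp add: t0_def t1_def complex_eq_iff power2_eq_square field_simps)

lemma solve:
  fixes a c :: complex and \<kappa> :: real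
  assumes kp: "\<kappa> > 0" and na: "cmod a = 1"
    and h1: "A1f a t0 t1 \<i> (complex_of_real \<kappa>) c = 0"
    and h2: "A2f a t0 t1 \<i> (complex_of_real \<kappa>) c = 0"
  shows "\<kappa> = 4 / (3 * sqrt 3) \<and> c = \<i> * complex_of_real (2 / (3 * sqrt 3))"
proof -
  define k where "k = complex_of_real \<kappa>"
  have knz: "k \<noteq> 0" using kp by (simp add: k_def)
  have t3: "t0^3 = -\<i>" by (rule t0_cube)
  have tt: "t0 * t1 = 1" by (rule t0t1)
  have a1: "A1f a t0 t1 \<i> k c = 4*k*\<i> - 3*a*k^2*(\<i> - t0)"
    unfolding A1f_def using t3 tt by algebra
  have a2: "A2f a t0 t1 \<i> k c = c*(4*\<i> - 6*a*k*(\<i> - t0)) - 6*a*k*(\<i> + t0) + 3*a^2*k^2*(\<i> + t1)"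
    unfolding A2f_def using t3 tt by algebra
  have "k * (3*a*k*(\<i> - t0)) = k * (4*\<i>)" using h1 a1 unfolding k_def[symmetric]
    by (simp add: power2_eq_square algebra_simps)
  hence e1: "3*a*k*(\<i> - t0) = 4*\<i>" using knz by simp
  hence "cmod (3*a*k*(\<i> - t0)) = 4" by simp
  hence "3 * \<kappa> * sqrt 3 = 4" using na kp norm_i_t0 by (simp add: norm_mult k_def)
  hence kap: "\<kappa> = 4 / (3 * sqrt 3)" by (simp add: field_simps)
  have "3 * t0 * k * (\<i> - t0) = 3 * k * (t0 * (\<i> - t0))" by simp
  also have "\<dots> = \<i> * complex_of_real (3 * \<kappa> * sqrt 3)" unfolding t0_i_t0 k_def by simp
  also have "3 * \<kappa> * sqrt 3 = 4" using kap by simp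
  finally have e2: "3 * t0 * k * (\<i> - t0) = 4 * \<i>" by simp
  have "(a - t0) * (3 * k * (\<i> - t0)) = 0" using e1 e2 by (simp add: algebra_simps)
  moreover have "\<i> - t0 \<noteq> 0" using norm_i_t0 by auto
  ultimately have at: "a = t0" using knz by simp
  have "0 = c*(4*\<i> - 2*(3*a*k*(\<i> - t0))) - 6*a*k*(\<i> + t0) + 3*a^2*k^2*(\<i> + t1)"
    using h2 a2 unfolding k_def[symmetric] by (simp add: algebra_simps)
  also have "\<dots> = -4*\<i>*c - 6*k*(t0*(\<i> + t0)) + 3*k^2*(t0^2*(\<i> + t1))"
    unfolding at e2 by (simp add: algebra_simps power2_eq_square)
  also have "\<dots> = -4*\<i>*c - 6*k + 3*k^2*complex_of_real (sqrt 3)"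
    unfolding t0_i_p t0_sq_i_t1 by simp
  finally have "4*\<i>*c = complex_of_real (3*\<kappa>^2 * sqrt 3 - 6*\<kappa>)"
    by (simp add: k_def algebra_simps)
  also have "3*\<kappa>^2 * sqrt 3 - 6*\<kappa> = -(8 / (3 * sqrt 3))"
    unfolding kap by (simp add: field_simps power2_eq_square)
  finally have h: "4*\<i>*c = complex_of_real (-(8 / (3 * sqrt 3)))" .
  have "c = (4*\<i>*c) / (4*\<i>)" by simp
  also have "\<dots> = complex_of_real (-(8 / (3 * sqrt 3))) / (4*\<i>)" unfolding h ..
  also have "\<dots> = \<i> * complex_of_real (2 / (3 * sqrt 3))" by (simp add: field_simps)
  finally have "c = \<i> * complex_of_real (2 / (3 * sqrt 3))" .
  with kap show ?thesis by simp
qed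



theorem mainTheorem3:
  fixes g :: "complex \<Rightarrow> complex" and \<kappa> :: real and c :: complex
  assumes holo: "g holomorphic_on (ball 0 1 - {0})"
    and inj: "inj_on g (ball 0 1 - {0})"
    and onto: "g ` (ball 0 1 - {0}) = - closure upper_half_disk"
    and kpos: "\<kappa> > 0"
    and expansion: "(\<lambda>z. g z - complex_of_real \<kappa> / z - c) \<in> O[at 0](\<lambda>z. z)"
  shows "\<kappa> = 4 / (3 * sqrt 3) \<and> c = \<i> * complex_of_real (2 / (3 * sqrt 3))"
proof -
  define B where "B = ball (0::complex) 1 - {0}"
  have gE: "g ` B = EE" using onto compl_closure B_def by simp
  have gin: "\<And>z. z \<in> B \<Longrightarrow> g z \<in> EE" using gE by blast
  have nz: "eventually (\<lambda>z::complex. z \<noteq> 0) (at 0)" by (simp add: eventually_at_filter)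
  have evB: "eventually (\<lambda>z. z \<in> B) (at 0)"
  proof -
    have "eventually (\<lambda>z::complex. z \<in> ball 0 1) (at 0)"
      by (rule eventually_at_in_open') auto
    thus ?thesis using nz by eventually_elim (auto simp: B_def)
  qed
  obtain C where Cpos: "C > 0"
    and Cb: "eventually (\<lambda>z. cmod (g z - complex_of_real \<kappa> / z - c) \<le> C * cmod z) (at 0)"
    using expansion by (elim landau_o.bigE) auto
  define k where "k = complex_of_real \<kappa>"
  have knz: "k \<noteq> 0" using kpos by (simp add: k_def)
  define s where "s z = z * g z - k - c * z" for z
  have sb: "eventually (\<lambda>z. cmod (s z) \<le> C * (cmod z)^2) (at 0)"
    using Cb nz
  proof eventually_elim
    case (elim z)
    have "s z = z * (g z - complex_of_real \<kappa> / z - c)" using elim(2)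
      by (simp add: s_def k_def field_simps)
    hence "cmod (s z) = cmod z * cmod (g z - complex_of_real \<kappa> / z - c)" by (simp add: norm_mult)
    also have "\<dots> \<le> cmod z * (C * cmod z)" using elim(1) by (intro mult_left_mono) auto
    finally show ?case by (simp add: power2_eq_square algebra_simps)
  qed
  have "((\<lambda>z. C * (cmod z)^2) \<longlongrightarrow> C * (cmod 0)^2) (at (0::complex))"
    by (intro tendsto_intros)
  hence "((\<lambda>z. C * (cmod z)^2) \<longlongrightarrow> 0) (at (0::complex))" by simp
  hence s0: "(s \<longlongrightarrow> 0) (at 0)" by (rule Lim_null_comparison[OF sb])
  have zg_eq: "\<And>z. z * g z = k + c * z + s z" by (simp add: s_def)
  have zg: "((\<lambda>z. z * g z) \<longlongrightarrow> k) (at 0)"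
  proof -
    have "((\<lambda>z. k + c * z + s z) \<longlongrightarrow> k + c * 0 + 0) (at 0)"
      by (intro tendsto_intros s0)
    thus ?thesis unfolding zg_eq by simp
  qed
  have Ulim: "((\<lambda>z. U (g z)) \<longlongrightarrow> -1) (at 0)"
  proof -
    have "((\<lambda>z. (z + z * g z) / (z - z * g z)) \<longlongrightarrow> (0 + k) / (0 - k)) (at 0)"
      using knz by (intro tendsto_intros zg) auto
    hence l: "((\<lambda>z. (z + z * g z) / (z - z * g z)) \<longlongrightarrow> -1) (at 0)" using knz by simp
    have "eventually (\<lambda>z. (z + z * g z) / (z - z * g z) = U (g z)) (at 0)"
      using nz
    proof eventually_elim
      case (elim z)
      have "(z + z * g z) / (z - z * g z) = (z * (1 + g z)) / (z * (1 - g z))"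
        by (simp add: algebra_simps)
      also have "\<dots> = U (g z)" unfolding U_def using elim by (rule mult_divide_mult_cancel_left)
      finally show ?case .
    qed
    thus ?thesis by (rule Lim_transform_eventually[OF l])
  qed
  define phi where "phi z = F (g z)" for z
  have phi_lim: "(phi \<longlongrightarrow> 0) (at 0)"
    unfolding phi_def F_def by (rule F_lim[OF Ulim])
  have phi_holo: "phi holomorphic_on B"
  proof -
    have "(F \<circ> g) holomorphic_on B"
      by (rule holomorphic_on_compose_gen[OF _ F_holo]) (use holo B_def gin in auto)
    thus ?thesis by (simp add: phi_def[abs_def] o_def)
  qed
  have phi_in: "\<And>z. z \<in> B \<Longrightarrow> phi z \<in> B"
    using F_in gin by (auto simp: phi_def B_def)
  define phi' where "phi' z = (if z = 0 then 0 else phi z)" for z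
  have phi'_holo: "phi' holomorphic_on ball 0 1"
  proof -
    have "(\<lambda>y. if y = 0 then 0 else phi y) holomorphic_on ball 0 1"
      by (rule removable_singularity) (use phi_holo B_def phi_lim in auto)
    thus ?thesis by (simp add: phi'_def[abs_def])
  qed
  have phi'_inj: "inj_on phi' (ball 0 1)"
  proof (rule inj_onI)
    fix x y assume x: "x \<in> ball 0 1" and y: "y \<in> ball 0 1" and e: "phi' x = phi' y"
    show "x = y"
    proof (cases "x = 0"; cases "y = 0")
      assume "x = 0" "y = 0" thus ?thesis by simp
    next
      assume "x = 0" "y \<noteq> 0"
      hence "phi y = 0" using e by (simp add: phi'_def)
      moreover have "phi y \<in> B" using phi_in y \<open>y \<noteq> 0\<close> B_def by auto
      ultimately show ?thesis by (simp add: B_def)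
    next
      assume "x \<noteq> 0" "y = 0"
      hence "phi x = 0" using e by (simp add: phi'_def)
      moreover have "phi x \<in> B" using phi_in x \<open>x \<noteq> 0\<close> B_def by auto
      ultimately show ?thesis by (simp add: B_def)
    next
      assume xy: "x \<noteq> 0" "y \<noteq> 0"
      hence xB: "x \<in> B" and yB: "y \<in> B" using x y B_def by auto
      have "F (g x) = F (g y)" using e xy by (simp add: phi'_def phi_def)
      hence "H (F (g x)) = H (F (g y))" by simp
      hence "g x = g y" using HF gin xB yB by simp
      thus ?thesis using inj xB yB B_def by (auto dest: inj_onD)
    qed
  qed
  have phi'_img: "phi' ` ball 0 1 = ball 0 1"
  proof
    show "phi' ` ball 0 1 \<subseteq> ball 0 1"
      using phi_in by (auto simp: phi'_def B_def)
  next
    show "ball 0 1 \<subseteq> phi' ` ball 0 1"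
    proof
      fix y :: complex assume y: "y \<in> ball 0 1"
      show "y \<in> phi' ` ball 0 1"
      proof (cases "y = 0")
        case True
        hence "y = phi' 0" by (simp add: phi'_def)
        thus ?thesis by auto
      next
        case False
        hence yB: "y \<in> B" using y B_def by simp
        hence "H y \<in> g ` B" using H_in gE B_def by simp
        then obtain z where zB: "z \<in> B" and gz: "g z = H y" by auto
        have "phi' z = y" using zB gz FH yB by (simp add: phi'_def phi_def B_def)
        moreover have "z \<in> ball 0 1" using zB B_def by simp
        ultimately show ?thesis by (metis image_eqI)
      qed
    qed
  qed
  obtain psi where psi_holo: "psi holomorphic_on (phi' ` ball 0 1)"
    and psi_inv: "\<And>z. z \<in> ball 0 1 \<Longrightarrow> psi (phi' z) = z"
    using holomorphic_has_inverse[OF phi'_holo open_ball phi'_inj] by metis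
  have psi_holo': "psi holomorphic_on ball 0 1" using psi_holo phi'_img by simp
  have phi'0: "phi' 0 = 0" by (simp add: phi'_def)
  have psi0: "psi 0 = 0" using psi_inv[of 0] phi'0 by simp
  have phi'_no: "\<And>z. norm z < 1 \<Longrightarrow> norm (phi' z) < 1"
    using phi'_img by auto
  have psi_no: "\<And>y. norm y < 1 \<Longrightarrow> norm (psi y) < 1"
  proof -
    fix y :: complex assume "norm y < 1"
    hence "y \<in> phi' ` ball 0 1" using phi'_img by simp
    then obtain z where "z \<in> ball 0 1" "y = phi' z" by auto
    thus "norm (psi y) < 1" using psi_inv by simp
  qed
  define xi :: complex where "xi = 1/2"
  have xi: "norm xi < 1" "xi \<noteq> 0" by (auto simp: xi_def)
  have h1: "norm (phi' xi) \<le> norm xi"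
    using Schwarz_Lemma(1)[OF phi'_holo phi'0 phi'_no xi(1)] .
  have h2: "norm (psi (phi' xi)) \<le> norm (phi' xi)"
    using Schwarz_Lemma(1)[OF psi_holo' psi0 psi_no phi'_no[OF xi(1)]] .
  have "psi (phi' xi) = xi" using psi_inv xi by simp
  hence "norm (phi' xi) = norm xi" using h1 h2 by simp
  then obtain a where a: "\<And>z. norm z < 1 \<Longrightarrow> phi' z = a * z" and na: "norm a = 1"
    using Schwarz_Lemma(3)[OF phi'_holo phi'0 phi'_no xi(1)] xi by blast
  have rel: "\<And>z. z \<in> B \<Longrightarrow> F (g z) = a * z"
  proof -
    fix z assume "z \<in> B"
    hence "norm z < 1" "z \<noteq> 0" by (auto simp: B_def)
    thus "F (g z) = a * z" using a[of z] by (simp add: phi'_def phi_def)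
  qed
  define P1 where "P1 z = (t0 + t1*a*z)^3 * (z - k - c*z - s z)^2 + \<i> * (z + k + c*z + s z)^2 * (1 - a*z)^3" for z
  have evP: "eventually (\<lambda>z. P1 z = 0) (at 0)"
    using evB
  proof eventually_elim
    case (elim z)
    have z0: "z \<noteq> 0" and zn: "norm z < 1" using elim B_def by auto
    have gE': "g z \<in> EE" using gin elim .
    have g1: "g z \<noteq> 1" using EE_ne1 gE' .
    have d1: "1 - a * z \<noteq> 0"
    proof
      assume "1 - a * z = 0"
      hence "norm (a * z) = 1" by (metis eq_iff_diff_eq_0 norm_one)
      thus False using na zn by (simp add: norm_mult)
    qed
    have d2: "z - z * g z \<noteq> 0" using z0 g1 by (simp add: right_diff_distrib[symmetric])
    have cube: "(Minv (a * z))^3 = -\<i> * (U (g z))^2" using F_cube[OF gE'] rel[OF elim] by simp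
    have m: "Minv (a * z) = (t0 + t1*a*z) / (1 - a*z)" by (simp add: Minv_def mult.assoc)
    have u: "U (g z) = (z + z * g z) / (z - z * g z)"
    proof -
      have "(z + z * g z) / (z - z * g z) = (z * (1 + g z)) / (z * (1 - g z))"
        by (simp add: algebra_simps)
      also have "\<dots> = U (g z)" unfolding U_def using z0 by (rule mult_divide_mult_cancel_left)
      finally show ?thesis by simp
    qed
    have "(t0 + t1*a*z)^3 / (1 - a*z)^3 = -\<i> * (z + z * g z)^2 / (z - z * g z)^2"
      using cube unfolding m u by (simp add: power_divide)
    hence "(t0 + t1*a*z)^3 * (z - z * g z)^2 = -\<i> * (z + z * g z)^2 * (1 - a*z)^3"
      using d1 d2 by (simp add: divide_eq_eq eq_divide_eq field_simps)
    hence "(t0 + t1*a*z)^3 * (z - z * g z)^2 + \<i> * (z + z * g z)^2 * (1 - a*z)^3 = 0"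
      by (simp add: algebra_simps)
    moreover have "z - z * g z = z - k - c*z - s z" "z + z * g z = z + k + c*z + s z"
      unfolding zg_eq by (simp_all add: algebra_simps)
    ultimately show ?case unfolding P1_def by simp
  qed
  have A0: "A0f a t0 t1 \<i> k c = 0" unfolding A0f_def using t0_cube by (simp add: algebra_simps)
  have B0: "B0f a t0 t1 \<i> k c = 0" unfolding B0f_def using t0_cube by (simp add: algebra_simps)
  have ev2: "eventually (\<lambda>z. A1f a t0 t1 \<i> k c * z + A2f a t0 t1 \<i> k c * z^2 + z^3 * Rf z a t0 t1 \<i> k c
      + s z * (z * Q1f z (s z) a t0 t1 \<i> k c + s z * Q2f z a t0 t1 \<i> k c) = 0) (at 0)"
    using evP
  proof eventually_elim
    case (elim z)
    thus ?case using poly_id[of t0 t1 a z k c "s z" \<i>] A0 B0 unfolding P1_def by (simp add: mult.assoc)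
  qed
  have z0: "((\<lambda>z::complex. z) \<longlongrightarrow> 0) (at 0)" by (rule tendsto_ident_at)
  have "A1f a t0 t1 \<i> k c = 0 \<and> A2f a t0 t1 \<i> k c = 0"
  proof (rule coeff_zero[OF ev2 _ _ _ sb])
    show "((\<lambda>z. Rf z a t0 t1 \<i> k c) \<longlongrightarrow> Rf 0 a t0 t1 \<i> k c) (at 0)"
      unfolding Rf_def by (intro tendsto_intros z0)
    show "((\<lambda>z. Q1f z (s z) a t0 t1 \<i> k c) \<longlongrightarrow> Q1f 0 0 a t0 t1 \<i> k c) (at 0)"
      unfolding Q1f_def by (intro tendsto_intros z0 s0)
    show "((\<lambda>z. Q2f z a t0 t1 \<i> k c) \<longlongrightarrow> Q2f 0 a t0 t1 \<i> k c) (at 0)"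
      unfolding Q2f_def by (intro tendsto_intros z0)
  qed
  thus ?thesis using solve[OF kpos na] unfolding k_def by blast
qed

end
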